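(* Let $C=(1,c_2,c_3,c_4,c_5,c_6)=(1,c_2,2c_2-1,c_4,c_2+c_4-1,2c_4-1)$ be a system with $c_4\ge 3c_2-1$, and let $\ell=\lceil c_5/c_3\rceil$. Suppose $\mathrm{grd}_C(\ell c_3)=\ell c_3-c_5+1-\lfloor(\ell c_3-c_5)/c_2\rfloor(c_2-1)$ and $\mathrm{grd}_C(\ell c_3)\le\ell$. Then $C$ is canonical and the subsystem $(1,c_2,2c_2-1,c_4,c_2+c_4-1)$ is noncanonical.
   Context: A system is a tuple $C=(c_1,\dots,c_n)$ of integers with $1=c_1<c_2<\dots<c_n$; for $k\le n$, $(c_1,\dots,c_k)$ is a subsystem. For a positive integer $v$, $\mathrm{opt}_C(v)$ is the minimum of $\sum_i x_i$ over $x\in\mathbb{Z}_{\ge0}^n$ with $\sum_i c_ix_i=v$. The greedy representation of $v$ is produced by: for $i=n$ down to $1$, while $c_i\le$ remaining value, take a coin $c_i$. $\mathrm{grd}_C(v)$ is its number of coins. A positive integer $w$ is a counterexample if $\mathrm{opt}_C(w)<\mathrm{grd}_C(w)$; $C$ is canonical if it has none, noncanonical otherwise. *)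

theory Defs
  imports Complex_Main
begin

text \<open>A coin system is a list C = [c_1,...,c_n] with 1 = c_1 < c_2 < ... < c_n.
  Coin c_{i+1} of the paper is C ! i.\<close>

definition is_system :: "nat list \<Rightarrow> bool" where
  "is_system C \<longleftrightarrow> C \<noteq> [] \<and> C ! 0 = 1 \<and> sorted_wrt (<) C"

definition reps :: "nat list \<Rightarrow> nat \<Rightarrow> nat list set" where
  "reps C v = {x. length x = length C \<and> (\<Sum>i<length C. C ! i * x ! i) = v}"

definition opt :: "nat list \<Rightarrow> nat \<Rightarrow> nat" where
  "opt C v = Min (sum_list ` reps C v)"

fun grd_desc :: "nat list \<Rightarrow> nat \<Rightarrow> nat" where
  "grd_desc [] v = 0"
| "grd_desc (c # cs) v = v div c + grd_desc cs (v mod c)"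

definition grd :: "nat list \<Rightarrow> nat \<Rightarrow> nat" where
  "grd C v = grd_desc (rev C) v"

definition counterexample :: "nat list \<Rightarrow> nat \<Rightarrow> bool" where
  "counterexample C w \<longleftrightarrow> 0 < w \<and> opt C w < grd C w"

definition canonical :: "nat list \<Rightarrow> bool" where
  "canonical C \<longleftrightarrow> (\<nexists>w. counterexample C w)"

end

theory Submission
  imports Defs
begin


lemma grd_desc_0: "grd_desc cs 0 = 0"
  by (induction cs) auto

lemma sys_pos:
  assumes "is_system C" "i < length C" shows "C ! i \<ge> 1"
proof (cases "i = 0")
  case True then show ?thesis using assms by (simp add: is_system_def)
next
  case False
  then have "C ! 0 < C ! i" using assms sorted_wrt_nth_less[of "(<)" C 0 i]
    by (simp add: is_system_def)
  then show ?thesis using assms by (simp add: is_system_def)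
qed

lemma reps_finite:
  assumes "is_system C" shows "finite (reps C v)"
proof -
  have "reps C v \<subseteq> {xs. set xs \<subseteq> {..v} \<and> length xs = length C}"
  proof
    fix x assume x: "x \<in> reps C v"
    have "\<forall>y\<in>set x. y \<le> v"
    proof
      fix y assume "y \<in> set x"
      then obtain i where i: "i < length x" "x ! i = y" by (auto simp: in_set_conv_nth)
      have li: "i < length C" using i x by (simp add: reps_def)
      have "y \<le> C ! i * x ! i" using sys_pos[OF assms li] i by simp
      also have "\<dots> \<le> (\<Sum>j<length C. C ! j * x ! j)"
        using li by (intro member_le_sum) auto
      finally show "y \<le> v" using x by (simp add: reps_def)
    qed
    then show "x \<in> {xs. set xs \<subseteq> {..v} \<and> length xs = length C}"
      using x by (auto simp: reps_def)
  qed
  then show ?thesis using finite_subset finite_lists_length_eq[of "{..v}"] by blast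
qed

lemma reps_nonempty:
  assumes "is_system C" shows "reps C v \<noteq> {}"
proof -
  define x where "x = v # replicate (length C - 1) 0"
  have lx: "length x = length C" using assms by (simp add: x_def is_system_def)
  have "(\<Sum>j<length C. C ! j * x ! j) = (\<Sum>j<length C. if j = 0 then v else 0)"
    using assms by (intro sum.cong) (auto simp: x_def is_system_def nth_Cons')
  also have "\<dots> = v" using assms by (simp add: is_system_def)
  finally show ?thesis using lx by (auto simp: reps_def)
qed

lemma opt_le:
  assumes "is_system C" "x \<in> reps C v" shows "opt C v \<le> sum_list x"
  unfolding opt_def using reps_finite[OF assms(1)] assms(2) by (intro Min_le) auto

lemma opt_in:
  assumes "is_system C" shows "\<exists>x\<in>reps C v. opt C v = sum_list x"
proof -
  have "Min (sum_list ` reps C v) \<in> sum_list ` reps C v"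
    using reps_finite[OF assms] reps_nonempty[OF assms] by (intro Min_in) auto
  then show ?thesis unfolding opt_def by auto
qed

lemma canonical_of_step:
  assumes sys: "is_system C"
    and step: "\<And>u i. i < length C \<Longrightarrow> grd C (u + C ! i) \<le> grd C u + 1"
  shows "canonical C"
proof -
  have main: "\<And>x. length x = length C \<Longrightarrow> sum_list x = m \<Longrightarrow>
     grd C (\<Sum>j<length C. C ! j * x ! j) \<le> m" for m
  proof (induction m)
    case 0
    then have "\<forall>j<length C. x ! j = 0" by (auto simp: sum_list_eq_0_iff)
    then have v0: "(\<Sum>j<length C. C ! j * x ! j) = 0" by simp
    show ?case unfolding v0 by (simp add: grd_def grd_desc_0)
  next
    case (Suc m)
    have "\<exists>i<length x. x ! i \<noteq> 0"
    proof (rule ccontr)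
      assume "\<not> ?thesis"
      then have "\<forall>y\<in>set x. y = 0" by (auto simp: in_set_conv_nth)
      then have "sum_list x = 0" by (simp add: sum_list_eq_0_iff)
      then show False using Suc by simp
    qed
    then obtain i where i: "i < length x" "x ! i \<noteq> 0" by blast
    define x' where "x' = x[i := x ! i - 1]"
    have lx': "length x' = length C" using Suc by (simp add: x'_def)
    have sx': "sum_list x' = m" using Suc i sum_list_update[of i x "x ! i - 1"]
      by (simp add: x'_def)
    have "(\<Sum>j<length C. C ! j * x ! j) = (\<Sum>j<length C. C ! j * x' ! j + (if j = i then C ! i else 0))"
    proof (intro sum.cong refl)
      fix j assume "j \<in> {..<length C}"
      show "C ! j * x ! j = C ! j * x' ! j + (if j = i then C ! i else 0)"
      proof (cases "j = i")
        case True
        have "x ! i = Suc (x ! i - 1)" using i by simp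
        then have "C ! i * x ! i = C ! i * (x ! i - 1) + C ! i" by (metis mult_Suc_right add.commute)
        then show ?thesis using True i by (simp add: x'_def)
      qed (simp add: x'_def)
    qed
    also have "\<dots> = (\<Sum>j<length C. C ! j * x' ! j) + C ! i"
      using i Suc by (simp add: sum.distrib)
    finally have eq: "(\<Sum>j<length C. C ! j * x ! j) = (\<Sum>j<length C. C ! j * x' ! j) + C ! i" .
    have "grd C (\<Sum>j<length C. C ! j * x ! j) \<le> grd C (\<Sum>j<length C. C ! j * x' ! j) + 1"
      unfolding eq using step i Suc by simp
    also have "\<dots> \<le> m + 1" using Suc.IH[OF lx' sx'] by simp
    finally show ?case by simp
  qed
  show ?thesis unfolding canonical_def counterexample_def
  proof
    assume "\<exists>w. 0 < w \<and> opt C w < grd C w"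
    then obtain w where w: "opt C w < grd C w" by blast
    obtain x where x: "x \<in> reps C w" "opt C w = sum_list x" using opt_in[OF sys] by blast
    have "grd C w \<le> sum_list x" using main[of x "sum_list x"] x by (auto simp: reps_def)
    then show False using w x by simp
  qed
qed



definition g3 :: "nat \<Rightarrow> nat \<Rightarrow> nat" where
  "g3 a t = t div (2*a-1) + (t mod (2*a-1)) div a + (t mod (2*a-1)) mod a"

definition hh :: "nat \<Rightarrow> nat \<Rightarrow> nat" where
  "hh a r = (if r < a then r else r - a + 1)"

lemma g3_qr:
  assumes a: "a \<ge> 2" and r: "r < 2*a-1"
  shows "g3 a (q*(2*a-1) + r) = q + hh a r"
proof -
  have A: "0 < 2*a-1" using a by simp
  have d: "(q*(2*a-1) + r) div (2*a-1) = q" using r A by simp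
  have m: "(q*(2*a-1) + r) mod (2*a-1) = r" using r A by simp
  show ?thesis
  proof (cases "r < a")
    case True then show ?thesis unfolding g3_def d m hh_def by simp
  next
    case False
    then have "r div a = 1" "r mod a = r - a" using r
      by (simp_all add: le_div_geq le_mod_geq div_less mod_less)
    then show ?thesis unfolding g3_def d m hh_def using False by simp
  qed
qed

lemma g3_split:
  assumes a: "a \<ge> 2"
  obtains q r where "t = q*(2*a-1) + r" "r < 2*a-1" "g3 a t = q + hh a r"
proof -
  have A: "0 < 2*a-1" using a by simp
  let ?q = "t div (2*a-1)" and ?r = "t mod (2*a-1)"
  have "t = ?q*(2*a-1) + ?r" by (metis div_mult_mod_eq)
  moreover have "?r < 2*a-1" using A by simp
  ultimately show ?thesis using that g3_qr[OF a] by metis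
qed

lemma g3_small: "a \<ge> 2 \<Longrightarrow> t < a \<Longrightarrow> g3 a t = t"
  using g3_qr[of a t 0] by (simp add: hh_def)

lemma g3_A: assumes a: "a \<ge> 2" shows "g3 a (t + (2*a-1)) = g3 a t + 1"
proof -
  obtain q r where qr: "t = q*(2*a-1) + r" "r < 2*a-1" "g3 a t = q + hh a r" using g3_split[OF a] by blast
  have "t + (2*a-1) = Suc q*(2*a-1) + r" using qr by simp
  then show ?thesis using g3_qr[OF a qr(2), of "Suc q"] qr by simp
qed

lemma g3_1: assumes a: "a \<ge> 2" shows "g3 a (t + 1) \<le> g3 a t + 1"
proof -
  obtain q r where qr: "t = q*(2*a-1) + r" "r < 2*a-1" "g3 a t = q + hh a r" using g3_split[OF a] by blast
  show ?thesis
  proof (cases "r + 1 < 2*a-1")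
    case True
    have e: "t + 1 = q*(2*a-1) + (r+1)" using qr by simp
    show ?thesis unfolding e using g3_qr[OF a True, of q] qr by (auto simp: hh_def)
  next
    case False
    then have "t + 1 = Suc q*(2*a-1) + 0" using qr by simp
    then show ?thesis using g3_qr[OF a, of 0 "Suc q"] qr a by (simp add: hh_def)
  qed
qed

lemma g3_a: assumes a: "a \<ge> 2" shows "g3 a (t + a) \<le> g3 a t + 1"
proof -
  obtain q r where qr: "t = q*(2*a-1) + r" "r < 2*a-1" "g3 a t = q + hh a r" using g3_split[OF a] by blast
  show ?thesis
  proof (cases "r + a < 2*a-1")
    case True
    have e: "t + a = q*(2*a-1) + (r+a)" using qr by simp
    show ?thesis unfolding e using g3_qr[OF a True, of q] qr True by (auto simp: hh_def)
  next
    case False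
    then have e: "t + a = Suc q*(2*a-1) + (r + 1 - a)" using qr by simp
    have lt: "r + 1 - a < 2*a-1" using qr a by simp
    have "g3 a (t+a) = Suc q + hh a (r + 1 - a)" unfolding e by (rule g3_qr[OF a lt])
    also have "hh a (r + 1 - a) = r + 1 - a" using qr a by (simp add: hh_def)
    finally have "g3 a (t+a) = Suc q + (r + 1 - a)" .
    moreover have "r + 1 - a \<le> hh a r" using False a by (simp add: hh_def) arith
    ultimately show ?thesis using qr by simp
  qed
qed

lemma g3_am1: assumes a: "a \<ge> 2" shows "g3 a t \<le> g3 a (t + (a - 1))"
proof -
  have "g3 a t + 1 = g3 a (t + (2*a-1))" using g3_A[OF a] by simp
  also have "t + (2*a-1) = (t + (a-1)) + a" using a by simp
  finally show ?thesis using g3_a[OF a, of "t + (a-1)"] by simp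
qed

lemma g3_k: assumes a: "a \<ge> 2" shows "g3 a (t + k) \<le> g3 a t + k"
proof (induction k)
  case (Suc k)
  then show ?case using g3_1[OF a, of "t+k"] by simp
qed simp

definition G5 :: "nat \<Rightarrow> nat \<Rightarrow> nat \<Rightarrow> nat" where
  "G5 a b s = grd_desc [a+b-1, b, 2*a-1, a, 1] s"

lemma g3_grd: "grd_desc [2*a-1, a, 1] t = g3 a t" by (simp add: g3_def)

context
  fixes a b :: nat
  assumes a2: "a \<ge> 2" and b3: "b \<ge> 3*a - 1"
begin

lemma R1: "s < b \<Longrightarrow> G5 a b s = g3 a s"
  unfolding G5_def using a2 b3 by (simp add: g3_def)

lemma R2: assumes "b \<le> s" "s < a+b-1" shows "G5 a b s = 1 + (s - b)"
proof -
  have "s div (a+b-1) = 0" "s mod (a+b-1) = s" using assms by simp_all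
  moreover have "s div b = 1" "s mod b = s - b" using assms a2 b3
    by (simp_all add: le_div_geq le_mod_geq div_less mod_less)
  moreover have "g3 a (s - b) = s - b" using g3_small[OF a2] assms by simp
  ultimately show ?thesis unfolding G5_def by (simp add: g3_def)
qed

lemma R3: assumes "a+b-1 \<le> s" "s < 2*b-1" shows "G5 a b s = 1 + g3 a (s - (a+b-1))"
proof -
  have "s div (a+b-1) = 1" "s mod (a+b-1) = s - (a+b-1)" using assms a2 b3
    by (simp_all add: le_div_geq le_mod_geq div_less mod_less)
  moreover have "s - (a+b-1) < b" using assms a2 by simp
  ultimately show ?thesis unfolding G5_def by (simp add: g3_def)
qed


lemma G5_0: "G5 a b 0 = 0"
  using R1[of 0] g3_small[OF a2, of 0] a2 b3 by simp

context
  assumes Q: "\<And>t. t \<le> a - 1 \<Longrightarrow> t \<le> g3 a (b - a + t)"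
begin

lemma A1: assumes "s + 1 < 2*b-1" shows "G5 a b (s+1) \<le> G5 a b s + 1"
proof -
  consider "s+1 < b" | "s+1 = b" | "b \<le> s" "s+1 < a+b-1" | "s+1 = a+b-1" | "a+b-1 \<le> s"
    by linarith
  then show ?thesis
  proof cases
    case 1 then show ?thesis using R1[of s] R1[of "s+1"] g3_1[OF a2, of s] by simp
  next
    case 2 then show ?thesis using R2[of "s+1"] a2 by simp
  next
    case 3 then show ?thesis using R2[of "s+1"] R2[of s] by simp
  next
    case 4
    have "G5 a b (s+1) = 1" using R3[of "s+1"] 4 g3_small[OF a2, of 0] a2 b3 by simp
    then show ?thesis by simp
  next
    case 5
    have e: "s + 1 - (a+b-1) = (s - (a+b-1)) + 1" using 5 by arith
    show ?thesis using R3[of "s+1"] R3[of s] 5 assms e g3_1[OF a2, of "s - (a+b-1)"] by simp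
  qed
qed

lemma Aa: assumes "s + a < 2*b-1" shows "G5 a b (s+a) \<le> G5 a b s + 1"
proof -
  consider "s+a < b" | "s < b" "b \<le> s+a" "s+a < a+b-1" | "s < b" "a+b-1 \<le> s+a"
    | "b \<le> s" "s < a+b-1" | "a+b-1 \<le> s"
    by linarith
  then show ?thesis
  proof cases
    case 1 then show ?thesis using R1[of s] R1[of "s+a"] g3_a[OF a2, of s] by simp
  next
    case 2
    have e: "s = b - a + (s + a - b)" using 2 a2 b3 by arith
    have "s + a - b \<le> g3 a s" using Q[of "s+a-b"] 2 e by simp
    then show ?thesis using R2[of "s+a"] R1[of s] 2 by simp
  next
    case 3
    have "s + a = a+b-1" using 3 a2 by arith
    then have "G5 a b (s+a) = 1" using R3[of "s+a"] g3_small[OF a2, of 0] a2 b3 by simp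
    then show ?thesis by simp
  next
    case 4
    have e: "s + a - (a+b-1) = s - b + 1" using 4 by arith
    have "g3 a (s - b + 1) = s - b + 1" using g3_small[OF a2] 4 by simp
    then show ?thesis using R3[of "s+a"] R2[of s] 4 assms e by simp
  next
    case 5
    have e: "s + a - (a+b-1) = (s - (a+b-1)) + a" using 5 by arith
    show ?thesis using R3[of "s+a"] R3[of s] 5 assms e g3_a[OF a2, of "s - (a+b-1)"] by simp
  qed
qed

lemma AA: assumes "s + (2*a-1) < 2*b-1" shows "G5 a b (s+(2*a-1)) \<le> G5 a b s + 1"
proof -
  consider "s+(2*a-1) < b" | "s < b" "b \<le> s+(2*a-1)" "s+(2*a-1) < a+b-1"
    | "s < b" "a+b-1 \<le> s+(2*a-1)"
    | "b \<le> s" "s < a+b-1" | "a+b-1 \<le> s"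
    by linarith
  then show ?thesis
  proof cases
    case 1 then show ?thesis using R1[of s] R1[of "s+(2*a-1)"] g3_A[OF a2, of s] by simp
  next
    case 2
    define t where "t = s + (2*a-1) - b"
    have t: "t + 1 \<le> a - 1" "s + a = b - a + (t+1)" using 2 a2 unfolding t_def by arith+
    have "t + 1 \<le> g3 a (s + a)" using Q[OF t(1)] t(2) by simp
    then have "t \<le> g3 a s" using g3_a[OF a2, of s] by simp
    then show ?thesis using R2[of "s+(2*a-1)"] R1[of s] 2 by (simp add: t_def)
  next
    case 3
    define t where "t = s - (b - a)"
    have t: "t \<le> a - 1" "s = b - a + t" "s + (2*a-1) - (a+b-1) = t" using 3 a2 b3
      unfolding t_def by arith+
    have "g3 a t = t" using g3_small[OF a2] t a2 by simp
    then show ?thesis using R3[of "s+(2*a-1)"] R1[of s] 3 assms t Q[OF t(1)] by simp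
  next
    case 4
    define t where "t = s - b"
    have t: "t < a - 1" "s + (2*a-1) - (a+b-1) = t + a" using 4 a2 unfolding t_def by arith+
    have "g3 a t = t" using g3_small[OF a2] t a2 by simp
    moreover have h1: "a+b-1 \<le> s+(2*a-1)" using 4 a2 by arith
    moreover have "G5 a b (s+(2*a-1)) = 1 + g3 a (t + a)" using R3[OF h1 assms] t by simp
    moreover have "G5 a b s = 1 + t" using R2[of s] 4 by (simp add: t_def)
    ultimately show ?thesis using g3_a[OF a2, of t] by simp
  next
    case 5
    have e: "s + (2*a-1) - (a+b-1) = (s - (a+b-1)) + (2*a-1)" using 5 by arith
    have h: "a+b-1 \<le> s+(2*a-1)" using 5 by arith
    have "G5 a b (s+(2*a-1)) = 1 + g3 a (s+(2*a-1) - (a+b-1))" by (rule R3[OF h assms])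
    also have "\<dots> = 1 + (g3 a (s - (a+b-1)) + 1)" unfolding e g3_A[OF a2] ..
    finally show ?thesis using R3[of s] 5 assms by simp
  qed
qed

lemma Ab: assumes "s + b < 2*b-1" shows "G5 a b (s+b) \<le> G5 a b s + 1"
proof -
  consider "s + b < a+b-1" | "a+b-1 \<le> s+b" by linarith
  then show ?thesis
  proof cases
    case 1
    have "g3 a s = s" using g3_small[OF a2] 1 by simp
    then show ?thesis using R2[of "s+b"] R1[of s] 1 assms by simp
  next
    case 2
    define t where "t = s - (a - 1)"
    have t: "s = t + (a-1)" "s + b - (a+b-1) = t" using 2 a2 unfolding t_def by arith+
    have sb: "s < b" using assms by arith
    have G1: "G5 a b (s+b) = 1 + g3 a t" using R3[OF 2 assms] t by simp
    have "G5 a b s = g3 a (t + (a-1))" using R1[OF sb] t by simp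
    then show ?thesis using G1 g3_am1[OF a2, of t] by simp
  qed
qed

lemma Ac5: assumes "s + (a+b-1) < 2*b-1" shows "G5 a b (s+(a+b-1)) \<le> G5 a b s + 1"
  using R3[of "s+(a+b-1)"] R1[of s] assms by simp

lemma B1: assumes "s < 2*b-1" "2*b-1 \<le> s + 1" shows "G5 a b (s + 1 - (2*b-1)) \<le> G5 a b s"
proof -
  have "s + 1 - (2*b-1) = 0" using assms by simp
  then show ?thesis using G5_0 by simp
qed

lemma Ba: assumes "s < 2*b-1" "2*b-1 \<le> s + a" shows "G5 a b (s + a - (2*b-1)) \<le> G5 a b s"
proof -
  define t where "t = s + a - (2*b-1)"
  have t: "t \<le> a - 1" "a+b-1 \<le> s" "s - (a+b-1) + a = b - a + t" using assms a2 b3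
    unfolding t_def by arith+
  have "G5 a b t = t" using R1[of t] g3_small[OF a2, of t] t a2 b3 by simp
  then show ?thesis using R3[of s] assms t Q[OF t(1)] g3_a[OF a2, of "s - (a+b-1)"]
    by (simp add: t_def)
qed

lemma BA: assumes "s < 2*b-1" "2*b-1 \<le> s + (2*a-1)"
  shows "G5 a b (s + (2*a-1) - (2*b-1)) \<le> G5 a b s"
proof -
  define t where "t = s + (2*a-1) - (2*b-1)"
  have t: "t < 2*a-1" "a+b-1 \<le> s" "s - (a+b-1) + (2*a-1) = b - a + t" using assms a2 b3
    unfolding t_def by arith+
  have G: "G5 a b t = g3 a t" using R1[of t] t a2 b3 by simp
  have "g3 a t \<le> g3 a (b - a + t)"
  proof (cases "t < a")
    case True then show ?thesis using g3_small[OF a2] Q[of t] by simp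
  next
    case False
    have "g3 a t = t - a + 1" using g3_qr[OF a2 t(1), of 0] False by (simp add: hh_def)
    moreover have "t - a + 1 \<le> g3 a (b - a + (t - a + 1))" using Q[of "t - a + 1"] t False by simp
    moreover have eq: "(b - a + (t - a + 1)) + (a - 1) = b - a + t" using False a2 by arith
    moreover have "g3 a (b - a + (t - a + 1)) \<le> g3 a (b - a + t)"
      using g3_am1[OF a2, of "b - a + (t - a + 1)"] unfolding eq .
    ultimately show ?thesis by linarith
  qed
  moreover have "G5 a b s = 1 + g3 a (s - (a+b-1))" using R3[of s] assms t by simp
  moreover have "g3 a (b - a + t) = g3 a (s - (a+b-1)) + 1"
    using g3_A[OF a2, of "s - (a+b-1)"] unfolding t(3) .
  ultimately show ?thesis unfolding t_def[symmetric] using G by linarith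
qed

lemma Bb: assumes "s < 2*b-1" "2*b-1 \<le> s + b"
  shows "G5 a b (s + b - (2*b-1)) \<le> G5 a b s"
proof -
  consider "s < b" | "b \<le> s" "s < a+b-1" | "a+b-1 \<le> s" by linarith
  then show ?thesis
  proof cases
    case 1
    then have "s + b - (2*b-1) = 0" using assms by simp
    then show ?thesis using G5_0 by simp
  next
    case 2
    define t where "t = s + b - (2*b-1)"
    have t: "t = s - b + 1" "t < a" using 2 assms unfolding t_def by arith+
    have "G5 a b t = t" using R1[of t] g3_small[OF a2, of t] t a2 b3 by simp
    then show ?thesis using R2[of s] 2 t by (simp add: t_def)
  next
    case 3
    define t where "t = s + b - (2*b-1)"
    have t: "t = s - (a+b-1) + a" "t < b" using 3 assms a2 unfolding t_def by arith+
    have "G5 a b t = g3 a t" using R1[of t] t by simp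
    then show ?thesis using R3[of s] 3 assms t g3_a[OF a2, of "s - (a+b-1)"] by (simp add: t_def)
  qed
qed

lemma Bc5: assumes "s < 2*b-1" "2*b-1 \<le> s + (a+b-1)"
  shows "G5 a b (s + (a+b-1) - (2*b-1)) \<le> G5 a b s"
proof -
  define t where "t = s + (a+b-1) - (2*b-1)"
  have t0: "t = s - (b - a)" "b - a \<le> s" using assms a2 b3 unfolding t_def by arith+
  have "G5 a b t \<le> G5 a b s"
  proof -
    consider "s < b" | "b \<le> s" "s < a+b-1" | "a+b-1 \<le> s" "t < b" | "a+b-1 \<le> s" "b \<le> t"
      by linarith
    then show ?thesis
    proof cases
      case 1
      have t: "t \<le> a - 1" "b - a + t = s" using 1 t0 by arith+
      have "G5 a b t = t" using R1[of t] g3_small[OF a2, of t] t a2 b3 by simp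
      moreover have "G5 a b s = g3 a s" using R1[of s] 1 by simp
      moreover have "t \<le> g3 a s" using Q[OF t(1)] unfolding t(2) .
      ultimately show ?thesis by linarith
    next
      case 2
      have t: "a \<le> t" "t < 2*a-1" "t - a + 1 = 1 + (s - b)" "t < b" using 2 t0 a2 b3 by arith+
      have "G5 a b t = g3 a t" using R1[of t] t by simp
      also have "\<dots> = t - a + 1" using g3_qr[OF a2 t(2), of 0] t by (simp add: hh_def)
      finally show ?thesis using R2[of s] 2 t by linarith
    next
      case 3
      have t: "t = s - (a+b-1) + (2*a-1)" using 3 t0 a2 by arith
      have "G5 a b t = g3 a t" using R1[of t] 3 by simp
      moreover have "g3 a t = g3 a (s - (a+b-1)) + 1" unfolding t by (rule g3_A[OF a2])
      moreover have "G5 a b s = 1 + g3 a (s - (a+b-1))" using R3[of s] 3 assms by simp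
      ultimately show ?thesis by linarith
    next
      case 4
      have t: "t < a+b-1" "t - b + 1 \<le> a - 1" "b - a + (t - b + 1) = s - (a+b-1) + a"
        using 4 t0 assms a2 by arith+
      have "G5 a b t = 1 + (t - b)" using R2[of t] t 4 by simp
      moreover have "t - b + 1 \<le> g3 a (s - (a+b-1) + a)" using Q[OF t(2)] unfolding t(3) .
      moreover have "G5 a b s = 1 + g3 a (s - (a+b-1))" using R3[of s] 4 assms by simp
      moreover have "g3 a (s - (a+b-1) + a) \<le> g3 a (s - (a+b-1)) + 1" by (rule g3_a[OF a2])
      ultimately show ?thesis by linarith
    qed
  qed
  then show ?thesis unfolding t_def .
qed

end

end


lemma qr_divmod: fixes q x c6 :: nat assumes "x < c6" shows "(q*c6 + x) div c6 = q" "(q*c6 + x) mod c6 = x"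
  using assms by simp_all

lemma step_gen:
  fixes c6 c u :: nat and G :: "nat \<Rightarrow> nat"
  assumes c: "c \<le> c6" "0 < c6"
    and A: "\<And>s. s < c6 \<Longrightarrow> s + c < c6 \<Longrightarrow> G (s + c) \<le> G s + 1"
    and B: "\<And>s. s < c6 \<Longrightarrow> c6 \<le> s + c \<Longrightarrow> G (s + c - c6) \<le> G s"
  shows "(u + c) div c6 + G ((u + c) mod c6) \<le> u div c6 + G (u mod c6) + 1"
proof -
  define q r where "q = u div c6" "r = u mod c6"
  have u: "u = q * c6 + r" "r < c6" using c by (simp_all add: q_r_def)
  show ?thesis
  proof (cases "r + c < c6")
    case True
    have e: "u + c = q * c6 + (r + c)" using u by simp
    have "(u + c) div c6 = q" "(u + c) mod c6 = r + c" unfolding e using qr_divmod[OF True] by simp_all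
    then show ?thesis using A[OF u(2) True] q_r_def by simp
  next
    case False
    have e: "u + c = Suc q * c6 + (r + c - c6)" using u False by simp
    have lt: "r + c - c6 < c6" using u c by simp
    have "(u + c) div c6 = Suc q" "(u + c) mod c6 = r + c - c6"
      unfolding e by (rule qr_divmod[OF lt])+
    then show ?thesis using B[OF u(2)] False q_r_def by simp
  qed
qed

lemma hh_ge1: "1 \<le> r \<Longrightarrow> 1 \<le> hh a r"
  by (simp add: hh_def)



theorem lemma12:
  fixes c2 c4 :: nat
  defines "C \<equiv> [1, c2, 2*c2 - 1, c4, c2 + c4 - 1, 2*c4 - 1]"
  defines "l \<equiv> nat \<lceil>real (c2 + c4 - 1) / real (2*c2 - 1)\<rceil>"
  assumes sys: "is_system C"
    and c4: "c4 \<ge> 3*c2 - 1"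
    and hgrd: "int (grd C (l * (2*c2 - 1))) =
       int (l * (2*c2 - 1)) - int (c2 + c4 - 1) + 1
       - \<lfloor>(real (l * (2*c2 - 1)) - real (c2 + c4 - 1)) / real c2\<rfloor> * (int c2 - 1)"
    and hle: "grd C (l * (2*c2 - 1)) \<le> l"
  shows "canonical C \<and> \<not> canonical (take 5 C)"
proof -
  have a2: "c2 \<ge> 2" using sys unfolding C_def is_system_def by simp
  have b3: "c4 \<ge> 3*c2 - 1" by (rule c4)
  have grdC: "grd C v = v div (2*c4-1) + G5 c2 c4 (v mod (2*c4-1))" for v
    unfolding C_def grd_def G5_def by simp
  define A where "A = 2*c2 - 1"
  define c5 where "c5 = c2 + c4 - 1"
  have Apos: "0 < A" using a2 by (simp add: A_def)
  have lk: "l = nat \<lceil>real c5 / real A\<rceil>" unfolding l_def c5_def A_def ..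
  define x where "x = real c5 / real A"
  have xpos: "0 < x" using Apos a2 by (simp add: x_def c5_def)
  have cc: "of_int \<lceil>x\<rceil> - 1 < x" "x \<le> of_int \<lceil>x\<rceil>" using ceiling_correct[of x] by auto
  have cpos: "\<lceil>x\<rceil> > 0" using xpos cc by linarith
  have rl: "real l = of_int \<lceil>x\<rceil>" using cpos unfolding lk x_def[symmetric] by simp
  have xa: "x * real A = real c5" using Apos by (simp add: x_def)
  have "x * real A \<le> of_int \<lceil>x\<rceil> * real A" using cc(2) Apos by (intro mult_right_mono) auto
  then have l1: "real c5 \<le> real l * real A" using xa rl by simp
  have "(of_int \<lceil>x\<rceil> - 1) * real A < x * real A" using cc(1) Apos by (intro mult_strict_right_mono) auto
  then have l2: "(real l - 1) * real A < real c5" using xa rl by simp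
  have lA1: "c5 \<le> l * A" using l1 by (metis of_nat_le_iff of_nat_mult)
  have "real l > 0" using rl cpos by simp
  then have lpos: "l \<ge> 1" by simp
  have lA2: "l * A < c5 + A"
  proof -
    have "real (l * A) < real (c5 + A)" using l2 by (simp add: algebra_simps)
    then show ?thesis by (simp only: of_nat_less_iff)
  qed
  define r where "r = l * A - c5"
  have rA: "r < A" "l * A = c5 + r" using lA1 lA2 by (simp_all add: r_def)
  have lc6: "l * A < 2*c4 - 1" using lA2 a2 b3 by (simp add: A_def c5_def)
  have "grd C (l * A) = G5 c2 c4 (l * A)" using grdC[of "l*A"] lc6 by simp
  also have "\<dots> = 1 + g3 c2 r" using R3[OF a2 b3, of "l*A"] lA1 lc6 by (simp add: r_def c5_def)
  also have "g3 c2 r = hh c2 r" using g3_qr[OF a2, of r 0] rA by (simp add: A_def)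
  finally have hle2: "1 + hh c2 r \<le> l" using hle by (simp add: A_def)
  have P: "c2 - 1 \<le> g3 c2 (c4 - 1)"
  proof (cases "r < c2")
    case True
    have e: "c4 - 1 = (l - 1) * A + (c2 - 1 - r)"
    proof -
      have "(l - 1) * A = l * A - A" by (simp add: diff_mult_distrib)
      moreover have "A \<le> l * A" using lpos by simp
      ultimately show ?thesis using rA True a2 unfolding A_def c5_def by linarith
    qed
    have "g3 c2 (c4 - 1) = (l - 1) + hh c2 (c2 - 1 - r)" unfolding e A_def using a2 by (intro g3_qr) auto
    then show ?thesis using hle2 True by (simp add: hh_def)
  next
    case False
    have e: "c4 - 1 = (l - 2) * A + (3*c2 - 2 - r)"
    proof -
      have "l \<ge> 2" using hle2 False by (simp add: hh_def)
      have "(l - 2) * A = l * A - 2 * A" by (simp add: diff_mult_distrib)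
      moreover have "2 * A \<le> l * A" using \<open>l \<ge> 2\<close> by simp
      ultimately show ?thesis using rA False a2 unfolding A_def c5_def by linarith
    qed
    have "3*c2 - 2 - r < 2*c2 - 1" using False a2 by simp
    then have "g3 c2 (c4 - 1) = (l - 2) + hh c2 (3*c2 - 2 - r)" unfolding e A_def using a2 by (intro g3_qr) auto
    moreover have "hh c2 (3*c2 - 2 - r) = 2*c2 - 1 - r" using False rA(1) unfolding hh_def A_def by (simp split: if_split) linarith
    moreover have "l \<ge> r - c2 + 2" using hle2 False unfolding hh_def by simp
    moreover have "r < 2*c2 - 1" using rA(1) unfolding A_def .
    ultimately show ?thesis using False by linarith
  qed
  have Q: "t \<le> g3 c2 (c4 - c2 + t)" if "t \<le> c2 - 1" for t
  proof -
    have "c4 - c2 + t + (c2 - 1 - t) = c4 - 1" using that a2 b3 by linarith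
    then have "g3 c2 (c4 - 1) \<le> g3 c2 (c4 - c2 + t) + (c2 - 1 - t)"
      using g3_k[OF a2, of "c4 - c2 + t" "c2 - 1 - t"] by simp
    then show ?thesis using P that by linarith
  qed
  have step: "grd C (u + C ! i) \<le> grd C u + 1" if i: "i < length C" for u i
  proof -
    have c6: "0 < 2*c4 - 1" using a2 b3 by linarith
    have "i < 6" using i by (simp add: C_def)
    then consider "i = 0" | "i = 1" | "i = 2" | "i = 3" | "i = 4" | "i = 5" by linarith
    then show ?thesis
    proof cases
      case 1
      show ?thesis unfolding grdC using 1 step_gen[of 1 "2*c4-1" "G5 c2 c4" u] c6
        A1[OF a2 b3 Q] B1[OF a2 b3 Q] by (simp add: C_def)
    next
      case 2
      show ?thesis unfolding grdC using 2 step_gen[of c2 "2*c4-1" "G5 c2 c4" u] c6 a2 b3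
        Aa[OF a2 b3 Q] Ba[OF a2 b3 Q] by (simp add: C_def)
    next
      case 3
      show ?thesis unfolding grdC using 3 step_gen[of "2*c2-1" "2*c4-1" "G5 c2 c4" u] c6 a2 b3
        AA[OF a2 b3 Q] BA[OF a2 b3 Q] by (simp add: C_def)
    next
      case 4
      show ?thesis unfolding grdC using 4 step_gen[of c4 "2*c4-1" "G5 c2 c4" u] c6 a2 b3
        Ab[OF a2 b3 Q] Bb[OF a2 b3 Q] by (simp add: C_def)
    next
      case 5
      show ?thesis unfolding grdC using 5 step_gen[of "c2+c4-1" "2*c4-1" "G5 c2 c4" u] c6 a2 b3
        Ac5[OF a2 b3 Q] Bc5[OF a2 b3 Q] by (simp add: C_def)
    next
      case 6
      show ?thesis unfolding grdC using 6 step_gen[of "2*c4-1" "2*c4-1" "G5 c2 c4" u] c6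
        by (simp add: C_def)
    qed
  qed
  have can: "canonical C" by (rule canonical_of_step[OF sys step])
  define D where "D = take 5 C"
  have D: "D = [1, c2, 2*c2 - 1, c4, c2 + c4 - 1]" by (simp add: D_def C_def)
  have sysD: "is_system D" using sys unfolding D C_def is_system_def by simp
  have xr: "[0,0,0,2,0] \<in> reps D (2*c4)"
    unfolding reps_def D by (simp add: lessThan_Suc numeral_eq_Suc)
  have o2: "opt D (2*c4) \<le> 2" using opt_le[OF sysD xr] by simp
  define m where "m = c4 - c2 + 1"
  have m: "2*c4 div (c2+c4-1) = 1" "2*c4 mod (c2+c4-1) = m" "m < c4" "2*c2 \<le> m"
    using a2 b3 unfolding m_def by (simp_all add: le_div_geq le_mod_geq div_less mod_less)
  have gD: "grd D (2*c4) = 1 + g3 c2 m" using m unfolding grd_def D by (simp add: g3_def)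
  have "2 \<le> g3 c2 m"
  proof -
    obtain q r where qr: "m = q*(2*c2-1) + r" "r < 2*c2-1" "g3 c2 m = q + hh c2 r"
      using g3_split[OF a2] by blast
    have "q \<noteq> 0"
    proof
      assume "q = 0"
      then have "m = r" using qr by simp
      then show False using qr(2) m(4) by linarith
    qed
    moreover have "q = 1 \<Longrightarrow> 1 \<le> r" using qr m(4) by simp
    ultimately show ?thesis using qr hh_ge1[of r c2] by (cases "q = 1") auto
  qed
  then have "counterexample D (2*c4)" unfolding counterexample_def using o2 gD a2 b3 by simp
  then have "\<not> canonical D" unfolding canonical_def by blast
  then show ?thesis using can unfolding D_def by simp
qed
end
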